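(* Let $c^\star:\Delta(S)\to[0,\infty]$ be grounded, convex and lower semi-continuous (the objective output-distribution cost), and let $\succeq$ be an unbounded moral-hazard preference with parsimonious representation $(c,u)$. Then $\succeq$ is overconfident if and only if $c(p)\le c^\star(p)$ for all $p\in\Delta(S)$, and $\succeq$ is optimistic if and only if $c$ is up-shifted from $c^\star$.
   Context: $S=\{s_1<\dots<s_{|S|}\}$ finite totally ordered, $\Delta(S)$ its simplex. $\Pi\subseteq\mathbb{R}$ convex; $\Delta(\Pi)$ finite-support distributions on $\Pi$; contracts $w:S\to\Delta(\Pi)$, set $W$; constant contracts identified with elements of $\Delta(\Pi)$; mixtures are probability mixtures. $u$ extends to $\Delta(\Pi)$ by expectation. Fixed reference prizes $\pi_0<\pi_1$; normalised means $\{u(\pi_0),u(\pi_1)\}=\{0,1\}$; grounded means infimum $0$. "$p$ FOSD $q$" means $\sum_{s\ge t}p(s)\ge\sum_{s\ge t}q(s)$ for all $t\in S$. A parsimonious representation of $\succeq$ is a pair $(c,u)$ with $c:\Delta(S)\to[0,\infty]$ grounded, convex, lsc and $u:\Pi\to\mathbb{R}$ strictly increasing and normalised, such that $w\succeq w'$ iff $\max_{p}[-c(p)+\sum_s u(w(s))p(s)]\ge\max_p[-c(p)+\sum_s u(w'(s))p(s)]$; a moral-hazard preference is one admitting such a representation. $\succeq$ is unbounded iff there are $x\succ y$ in $\Delta(\Pi)$ such that for every $\alpha\in(0,1)$ there exist $z,z'\in\Delta(\Pi)$ with $y\succ\alpha z+(1-\alpha)x$ and $\alpha z'+(1-\alpha)y\succ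 x$. More confident: $\succeq$ is more confident than $\succeq'$ iff for all $w\in W$ and constant $x\in\Delta(\Pi)$, $w\succeq'x\Rightarrow w\succeq x$ and $w\succ'x\Rightarrow w\succ x$. Steeper: $w$ is $\succeq$-steeper than $w'$ iff $\tfrac12w(s)+\tfrac12w'(s')\succeq\tfrac12w(s')+\tfrac12w'(s)$ for all $s\ge s'$. More optimistic: $\succeq$ is more optimistic than $\succeq'$ iff whenever $w$ is $\succeq$-steeper than $w'$, $w\succeq'w'\Rightarrow w\succeq w'$ and $w\succ'w'\Rightarrow w\succ w'$. Up-shifted: $c$ is up-shifted from $c'$ iff for any $p,p'\in\Delta(S)$ there exist $q,q'\in\Delta(S)$ with $p$ FOSD $q'$, $q$ FOSD $p'$, $\tfrac12p+\tfrac12p'=\tfrac12q+\tfrac12q'$, and $c(q)+c'(q')\le c(p)+c'(p')$. Absolute notions: for a moral-hazard preference $\succeq$ with (unique normalised, strictly increasing) utility $u$, let $\succeq^\star$ be the moral-hazard preference with parsimonious representation $(c^\star,u)$. $\succeq$ is overconfident iff it is more confident than $\succeq^\star$, and optimistic iff it is more optimistic than $\succeq^\star$. *)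

theory Defs
  imports "HOL-Analysis.Analysis" "HOL-Probability.Probability_Mass_Function"
begin

definition DeltaS :: "('s::finite \<Rightarrow> real) set" where
  "DeltaS = {p. (\<forall>s. 0 \<le> p s) \<and> (\<Sum>s\<in>UNIV. p s) = 1}"

definition fosd :: "('s::{finite,linorder} \<Rightarrow> real) \<Rightarrow> ('s \<Rightarrow> real) \<Rightarrow> bool" where
  "fosd p q \<longleftrightarrow> (\<forall>t. (\<Sum>s\<in>{s. s \<ge> t}. p s) \<ge> (\<Sum>s\<in>{s. s \<ge> t}. q s))"

definition cost_fun :: "(('s::finite \<Rightarrow> real) \<Rightarrow> ereal) \<Rightarrow> bool" where
  "cost_fun c \<longleftrightarrow> (\<forall>p\<in>DeltaS. 0 \<le> c p)"

definition grounded :: "(('s::finite \<Rightarrow> real) \<Rightarrow> ereal) \<Rightarrow> bool" where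
  "grounded c \<longleftrightarrow> (INF p\<in>DeltaS. c p) = 0"

definition convex_cost :: "(('s::finite \<Rightarrow> real) \<Rightarrow> ereal) \<Rightarrow> bool" where
  "convex_cost c \<longleftrightarrow> (\<forall>p\<in>DeltaS. \<forall>q\<in>DeltaS. \<forall>t::real. 0 \<le> t \<and> t \<le> 1 \<longrightarrow>
      c (\<lambda>s. t * p s + (1 - t) * q s) \<le> ereal t * c p + ereal (1 - t) * c q)"

(* lower semicontinuity on Delta(S) (sequential; Delta(S) is a compact subset of R^S) *)
definition lsc_cost :: "(('s::finite \<Rightarrow> real) \<Rightarrow> ereal) \<Rightarrow> bool" where
  "lsc_cost c \<longleftrightarrow> (\<forall>p\<in>DeltaS. \<forall>X. (\<forall>n. X n \<in> DeltaS) \<and> X \<longlonglongrightarrow> p \<longrightarrow>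
      c p \<le> liminf (\<lambda>n. c (X n)))"

definition admissible_cost :: "(('s::finite \<Rightarrow> real) \<Rightarrow> ereal) \<Rightarrow> bool" where
  "admissible_cost c \<longleftrightarrow> cost_fun c \<and> grounded c \<and> convex_cost c \<and> lsc_cost c"

definition lotteries :: "real set \<Rightarrow> real pmf set" where
  "lotteries Prizes = {x. finite (set_pmf x) \<and> set_pmf x \<subseteq> Prizes}"

definition lot_mix :: "real \<Rightarrow> 'a pmf \<Rightarrow> 'a pmf \<Rightarrow> 'a pmf" where
  "lot_mix a x y = bind_pmf (bernoulli_pmf a) (\<lambda>b. if b then x else y)"

definition contracts :: "real set \<Rightarrow> ('s \<Rightarrow> real pmf) set" where
  "contracts Prizes = {w. \<forall>s. w s \<in> lotteries Prizes}"

definition const_contract :: "real pmf \<Rightarrow> ('s \<Rightarrow> real pmf)" where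
  "const_contract x = (\<lambda>_. x)"

definition EU :: "(real \<Rightarrow> real) \<Rightarrow> real pmf \<Rightarrow> real" where
  "EU u x = (\<Sum>y\<in>set_pmf x. pmf x y * u y)"

definition rep_value :: "(('s::finite \<Rightarrow> real) \<Rightarrow> ereal) \<Rightarrow> (real \<Rightarrow> real) \<Rightarrow> ('s \<Rightarrow> real pmf) \<Rightarrow> ereal" where
  "rep_value c u w = (SUP p\<in>DeltaS. - c p + ereal (\<Sum>s\<in>UNIV. EU u (w s) * p s))"

definition rep_pref :: "(('s::finite \<Rightarrow> real) \<Rightarrow> ereal) \<Rightarrow> (real \<Rightarrow> real) \<Rightarrow> ('s \<Rightarrow> real pmf) \<Rightarrow> ('s \<Rightarrow> real pmf) \<Rightarrow> bool" where
  "rep_pref c u w w' \<longleftrightarrow> rep_value c u w' \<le> rep_value c u w"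

definition normalised :: "real \<Rightarrow> real \<Rightarrow> (real \<Rightarrow> real) \<Rightarrow> bool" where
  "normalised pi0 pi1 u \<longleftrightarrow> {u pi0, u pi1} = {0, 1}"

definition parsimonious_rep ::
  "real set \<Rightarrow> real \<Rightarrow> real \<Rightarrow> (('s::finite \<Rightarrow> real pmf) \<Rightarrow> ('s \<Rightarrow> real pmf) \<Rightarrow> bool)
   \<Rightarrow> (('s \<Rightarrow> real) \<Rightarrow> ereal) \<Rightarrow> (real \<Rightarrow> real) \<Rightarrow> bool" where
  "parsimonious_rep Prizes pi0 pi1 R c u \<longleftrightarrow>
     admissible_cost c \<and> strict_mono_on Prizes u \<and> normalised pi0 pi1 u \<and>
     (\<forall>w\<in>contracts Prizes. \<forall>w'\<in>contracts Prizes. R w w' \<longleftrightarrow> rep_value c u w' \<le> rep_value c u w)"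

definition moral_hazard :: "real set \<Rightarrow> real \<Rightarrow> real \<Rightarrow> (('s::finite \<Rightarrow> real pmf) \<Rightarrow> ('s \<Rightarrow> real pmf) \<Rightarrow> bool) \<Rightarrow> bool" where
  "moral_hazard Prizes pi0 pi1 R \<longleftrightarrow> (\<exists>c u. parsimonious_rep Prizes pi0 pi1 R c u)"

definition strict_pref :: "('w \<Rightarrow> 'w \<Rightarrow> bool) \<Rightarrow> 'w \<Rightarrow> 'w \<Rightarrow> bool" where
  "strict_pref R w w' \<longleftrightarrow> R w w' \<and> \<not> R w' w"

definition unbounded :: "real set \<Rightarrow> (('s \<Rightarrow> real pmf) \<Rightarrow> ('s \<Rightarrow> real pmf) \<Rightarrow> bool) \<Rightarrow> bool" where
  "unbounded Prizes R \<longleftrightarrow> (\<exists>x\<in>lotteries Prizes. \<exists>y\<in>lotteries Prizes. strict_pref R (const_contract x) (const_contract y) \<and>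
     (\<forall>a. 0 < a \<and> a < 1 \<longrightarrow> (\<exists>z\<in>lotteries Prizes. \<exists>z'\<in>lotteries Prizes.
         strict_pref R (const_contract y) (const_contract (lot_mix a z x)) \<and> strict_pref R (const_contract (lot_mix a z' y)) (const_contract x))))"

definition more_confident :: "real set \<Rightarrow> (('s \<Rightarrow> real pmf) \<Rightarrow> ('s \<Rightarrow> real pmf) \<Rightarrow> bool)
   \<Rightarrow> (('s \<Rightarrow> real pmf) \<Rightarrow> ('s \<Rightarrow> real pmf) \<Rightarrow> bool) \<Rightarrow> bool" where
  "more_confident Prizes R R' \<longleftrightarrow> (\<forall>w\<in>contracts Prizes. \<forall>x\<in>lotteries Prizes.
     (R' w (const_contract x) \<longrightarrow> R w (const_contract x)) \<and> (strict_pref R' w (const_contract x) \<longrightarrow> strict_pref R w (const_contract x)))"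

definition steeper :: "(('s::linorder \<Rightarrow> real pmf) \<Rightarrow> ('s \<Rightarrow> real pmf) \<Rightarrow> bool)
   \<Rightarrow> ('s \<Rightarrow> real pmf) \<Rightarrow> ('s \<Rightarrow> real pmf) \<Rightarrow> bool" where
  "steeper R w w' \<longleftrightarrow> (\<forall>s s'. s \<ge> s' \<longrightarrow>
     R (const_contract (lot_mix (1/2) (w s) (w' s'))) (const_contract (lot_mix (1/2) (w s') (w' s))))"

definition more_optimistic :: "real set \<Rightarrow> (('s::linorder \<Rightarrow> real pmf) \<Rightarrow> ('s \<Rightarrow> real pmf) \<Rightarrow> bool)
   \<Rightarrow> (('s \<Rightarrow> real pmf) \<Rightarrow> ('s \<Rightarrow> real pmf) \<Rightarrow> bool) \<Rightarrow> bool" where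
  "more_optimistic Prizes R R' \<longleftrightarrow> (\<forall>w\<in>contracts Prizes. \<forall>w'\<in>contracts Prizes. steeper R w w' \<longrightarrow>
     (R' w w' \<longrightarrow> R w w') \<and> (strict_pref R' w w' \<longrightarrow> strict_pref R w w'))"

definition up_shifted :: "(('s::{finite,linorder} \<Rightarrow> real) \<Rightarrow> ereal) \<Rightarrow> (('s \<Rightarrow> real) \<Rightarrow> ereal) \<Rightarrow> bool" where
  "up_shifted c c' \<longleftrightarrow> (\<forall>p\<in>DeltaS. \<forall>p'\<in>DeltaS. \<exists>q\<in>DeltaS. \<exists>q'\<in>DeltaS.
     fosd p q' \<and> fosd q p' \<and> (\<lambda>s. p s / 2 + p' s / 2) = (\<lambda>s. q s / 2 + q' s / 2) \<and>
     c q + c' q' \<le> c p + c' p')"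

(* Absolute notions: compare with the preference represented by (cstar, u), u the
   (unique) utility of R; stated for every u of a parsimonious representation of R. *)
definition overconfident :: "real set \<Rightarrow> real \<Rightarrow> real \<Rightarrow> (('s::finite \<Rightarrow> real pmf) \<Rightarrow> ('s \<Rightarrow> real pmf) \<Rightarrow> bool)
   \<Rightarrow> (('s \<Rightarrow> real) \<Rightarrow> ereal) \<Rightarrow> bool" where
  "overconfident Prizes pi0 pi1 R cstar \<longleftrightarrow>
     (\<forall>c u. parsimonious_rep Prizes pi0 pi1 R c u \<longrightarrow> more_confident Prizes R (rep_pref cstar u))"

definition optimistic :: "real set \<Rightarrow> real \<Rightarrow> real \<Rightarrow> (('s::{finite,linorder} \<Rightarrow> real pmf) \<Rightarrow> ('s \<Rightarrow> real pmf) \<Rightarrow> bool)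
   \<Rightarrow> (('s \<Rightarrow> real) \<Rightarrow> ereal) \<Rightarrow> bool" where
  "optimistic Prizes pi0 pi1 R cstar \<longleftrightarrow>
     (\<forall>c u. parsimonious_rep Prizes pi0 pi1 R c u \<longrightarrow> more_optimistic Prizes R (rep_pref cstar u))"

end

theory Submission
  imports Defs
begin

lemma sep_lemma:
  fixes E :: "('a::euclidean_space \<times> real) set" and x0 :: 'a and M :: real
  assumes cvx: "convex E" and cl: "closed E"
    and up: "\<And>x v w. (x,v) \<in> E \<Longrightarrow> v \<le> w \<Longrightarrow> (x,w) \<in> E"
    and nn: "\<And>x v. (x,v) \<in> E \<Longrightarrow> 0 \<le> v"
    and nin: "(x0, M) \<notin> E"
  shows "\<exists>l b. (\<forall>x v. (x,v) \<in> E \<longrightarrow> inner l x + b \<le> v) \<and> M < inner l x0 + b"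
proof -
  obtain a b where ab: "inner a (x0,M) < b" "\<forall>y\<in>E. inner a y > b"
    using separating_hyperplane_closed_point[OF cvx cl nin] by blast
  obtain l mu where a: "a = (l, mu)" by (cases a)
  show ?thesis
  proof (cases "E = {}")
    case True
    then show ?thesis by (intro exI[of _ 0] exI[of _ "M+1"]) auto
  next
    case False
    then obtain x1 v1 where x1: "(x1,v1) \<in> E" by auto
    have mu: "mu \<ge> 0"
    proof (rule ccontr)
      assume "\<not> mu \<ge> 0"
      hence neg: "mu < 0" by simp
      define w where "w = max v1 ((b - inner l x1) / mu + 1)"
      have "(x1, w) \<in> E" using up[OF x1] by (simp add: w_def)
      hence "inner l x1 + mu * w > b" using ab a by (auto simp: inner_Pair)
      moreover have "w \<ge> (b - inner l x1) / mu + 1" by (simp add: w_def)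
      hence "mu * w \<le> mu * ((b - inner l x1) / mu + 1)" using neg
        by (simp add: mult_le_cancel_left)
      moreover have "mu * ((b - inner l x1) / mu + 1) = b - inner l x1 + mu" using neg by (simp add: field_simps)
      ultimately show False using neg by linarith
    qed
    show ?thesis
    proof (cases "mu = 0")
      case False
      hence mup: "mu > 0" using mu by simp
      show ?thesis
      proof (intro exI[of _ "- l /\<^sub>R mu"] exI[of _ "b / mu"] conjI allI impI)
        fix x v assume "(x,v) \<in> E"
        hence "inner l x + mu * v > b" using ab a by (auto simp: inner_Pair)
        thus "inner (- l /\<^sub>R mu) x + b / mu \<le> v" using mup
          by (simp add: field_simps)
      next
        have "inner l x0 + mu * M < b" using ab a by (auto simp: inner_Pair)
        thus "M < inner (- l /\<^sub>R mu) x0 + b / mu" using mup by (simp add: field_simps)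
      qed
    next
      case True
      have g0: "inner l x0 < b" using ab a True by (auto simp: inner_Pair)
      have gE: "\<And>x v. (x,v) \<in> E \<Longrightarrow> inner l x > b" using ab a True by (auto simp: inner_Pair)
      define t where "t = (\<bar>M\<bar> + 1) / (b - inner l x0)"
      have tp: "t > 0" using g0 by (simp add: t_def)
      show ?thesis
      proof (intro exI[of _ "- t *\<^sub>R l"] exI[of _ "t * b"] conjI allI impI)
        fix x v assume xv: "(x,v) \<in> E"
        have "t * (b - inner l x) \<le> 0" using gE[OF xv] tp
          by (simp add: mult_nonneg_nonpos)
        thus "inner (- t *\<^sub>R l) x + t * b \<le> v" using nn[OF xv]
          by (simp add: algebra_simps)
      next
        have "t * (b - inner l x0) = \<bar>M\<bar> + 1" using g0 by (simp add: t_def)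
        thus "M < inner (- t *\<^sub>R l) x0 + t * b" by (simp add: algebra_simps)
      qed
    qed
  qed
qed


lemma pmf_lot_mix:
  assumes "0 \<le> a" "a \<le> 1"
  shows "pmf (lot_mix a x y) z = a * pmf x z + (1 - a) * pmf y z"
proof -
  have "pmf (lot_mix a x y) z = (\<integral>b. pmf (if b then x else y) z \<partial>measure_pmf (bernoulli_pmf a))"
    unfolding lot_mix_def pmf_bind by simp
  also have "\<dots> = (\<Sum>b\<in>UNIV. pmf (if b then x else y) z * pmf (bernoulli_pmf a) b)"
    by (rule integral_measure_pmf_real) auto
  also have "\<dots> = a * pmf x z + (1 - a) * pmf y z" using assms by (simp add: UNIV_bool)
  finally show ?thesis .
qed

lemma set_lot_mix: "set_pmf (lot_mix a x y) \<subseteq> set_pmf x \<union> set_pmf y"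
  unfolding lot_mix_def by (auto split: if_splits)

lemma lotteries_mix: "x \<in> lotteries P \<Longrightarrow> y \<in> lotteries P \<Longrightarrow> lot_mix a x y \<in> lotteries P"
  unfolding lotteries_def using set_lot_mix[of a x y]
  by (auto intro: finite_subset)

lemma lotteries_return: "z \<in> P \<Longrightarrow> return_pmf z \<in> lotteries P"
  unfolding lotteries_def by auto

lemma EU_superset:
  assumes "finite A" "set_pmf x \<subseteq> A"
  shows "EU u x = (\<Sum>y\<in>A. pmf x y * u y)"
  unfolding EU_def
  by (rule sum.mono_neutral_left) (use assms in \<open>auto simp: set_pmf_eq\<close>)

lemma EU_return: "EU u (return_pmf z) = u z"
  unfolding EU_def by simp

lemma EU_mix:
  assumes "finite (set_pmf x)" "finite (set_pmf y)" "0 \<le> a" "a \<le> 1"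
  shows "EU u (lot_mix a x y) = a * EU u x + (1 - a) * EU u y"
proof -
  let ?A = "set_pmf x \<union> set_pmf y"
  have f: "finite ?A" using assms by auto
  have "EU u (lot_mix a x y) = (\<Sum>z\<in>?A. pmf (lot_mix a x y) z * u z)"
    by (rule EU_superset[OF f set_lot_mix])
  also have "\<dots> = (\<Sum>z\<in>?A. a * (pmf x z * u z) + (1 - a) * (pmf y z * u z))"
    using assms by (simp add: pmf_lot_mix algebra_simps)
  also have "\<dots> = a * (\<Sum>z\<in>?A. pmf x z * u z) + (1 - a) * (\<Sum>z\<in>?A. pmf y z * u z)"
    by (simp add: sum.distrib sum_distrib_left)
  also have "\<dots> = a * EU u x + (1 - a) * EU u y"
    using EU_superset[OF f, of x u] EU_superset[OF f, of y u] by auto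
  finally show ?thesis .
qed

definition ip :: "('s::finite \<Rightarrow> real) \<Rightarrow> ('s \<Rightarrow> real) \<Rightarrow> real" where
  "ip a p = (\<Sum>s\<in>UNIV. a s * p s)"

definition Vf :: "(('s::finite \<Rightarrow> real) \<Rightarrow> ereal) \<Rightarrow> ('s \<Rightarrow> real) \<Rightarrow> ereal" where
  "Vf c a = (SUP p\<in>DeltaS. - c p + ereal (ip a p))"

definition Vr :: "(('s::finite \<Rightarrow> real) \<Rightarrow> ereal) \<Rightarrow> ('s \<Rightarrow> real) \<Rightarrow> real" where
  "Vr c a = real_of_ereal (Vf c a)"

definition okc :: "(('s::finite \<Rightarrow> real) \<Rightarrow> ereal) \<Rightarrow> bool" where
  "okc c \<longleftrightarrow> (\<forall>p\<in>DeltaS. 0 \<le> c p) \<and> (\<exists>p\<in>DeltaS. c p < \<infinity>)"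

lemma DeltaS_le1: "p \<in> DeltaS \<Longrightarrow> 0 \<le> p s \<and> p s \<le> 1"
proof -
  assume p: "p \<in> DeltaS"
  hence "p s \<le> (\<Sum>s\<in>UNIV. p s)"
    unfolding DeltaS_def by (intro member_le_sum) auto
  thus ?thesis using p unfolding DeltaS_def by auto
qed

lemma ip_bound: "p \<in> DeltaS \<Longrightarrow> \<bar>ip a p\<bar> \<le> (\<Sum>s\<in>UNIV. \<bar>a s\<bar>)"
proof -
  assume p: "p \<in> DeltaS"
  have "\<bar>ip a p\<bar> \<le> (\<Sum>s\<in>UNIV. \<bar>a s * p s\<bar>)" unfolding ip_def by (rule sum_abs)
  also have "\<dots> \<le> (\<Sum>s\<in>UNIV. \<bar>a s\<bar>)"
  proof (rule sum_mono)
    fix s have "0 \<le> p s" "p s \<le> 1" using DeltaS_le1[OF p] by auto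
    thus "\<bar>a s * p s\<bar> \<le> \<bar>a s\<bar>" by (simp add: abs_mult mult_left_le)
  qed
  finally show ?thesis .
qed

lemma Vf_ge: "p \<in> DeltaS \<Longrightarrow> - c p + ereal (ip a p) \<le> Vf c a"
  unfolding Vf_def by (rule SUP_upper)

lemma Vf_le:
  fixes c :: "('s::finite \<Rightarrow> real) \<Rightarrow> ereal"
  assumes "okc c" "\<And>p x. p \<in> DeltaS \<Longrightarrow> c p = ereal x \<Longrightarrow> ip a p - x \<le> K"
  shows "Vf c a \<le> ereal K"
  unfolding Vf_def
proof (rule SUP_least)
  fix p :: "'s \<Rightarrow> real" assume p: "p \<in> DeltaS"
  have "0 \<le> c p" using assms(1) p unfolding okc_def by auto
  show "- c p + ereal (ip a p) \<le> ereal K"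
  proof (cases "c p")
    case (real x) thus ?thesis using assms(2)[OF p real] by simp
  next
    case PInf thus ?thesis by simp
  next
    case MInf thus ?thesis using \<open>0 \<le> c p\<close> by simp
  qed
qed

lemma Vf_finite:
  assumes "okc c" shows "Vf c a = ereal (Vr c a)"
proof -
  obtain p where p: "p \<in> DeltaS" "c p < \<infinity>" using assms unfolding okc_def by auto
  have "0 \<le> c p" using assms p unfolding okc_def by auto
  then obtain x where x: "c p = ereal x" using p by (cases "c p") auto
  have "- c p + ereal (ip a p) \<le> Vf c a" by (rule Vf_ge[OF p(1)])
  hence lo: "Vf c a \<noteq> -\<infinity>" using x by auto
  have "Vf c a \<le> ereal (\<Sum>s\<in>UNIV. \<bar>a s\<bar>)"
  proof (rule Vf_le[OF assms])
    fix q y assume q: "q \<in> DeltaS" "c q = ereal y"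
    have "0 \<le> y" using assms q unfolding okc_def by force
    thus "ip a q - y \<le> (\<Sum>s\<in>UNIV. \<bar>a s\<bar>)" using ip_bound[OF q(1), of a] by linarith
  qed
  hence "Vf c a \<noteq> \<infinity>" by auto
  with lo show ?thesis unfolding Vr_def by (cases "Vf c a") auto
qed

lemma Vr_ge: "okc c \<Longrightarrow> p \<in> DeltaS \<Longrightarrow> c p = ereal x \<Longrightarrow> ip a p - x \<le> Vr c a"
  using Vf_ge[of p c a] Vf_finite[of c a] by simp

lemma Vr_le: "okc c \<Longrightarrow> (\<And>p x. p \<in> DeltaS \<Longrightarrow> c p = ereal x \<Longrightarrow> ip a p - x \<le> K) \<Longrightarrow> Vr c a \<le> K"
  using Vf_le[of c a K] Vf_finite[of c a] by simp

lemma ip_shift: "p \<in> DeltaS \<Longrightarrow> ip (\<lambda>s. a s + k) p = ip a p + k"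
  unfolding ip_def DeltaS_def by (simp add: algebra_simps sum.distrib sum_distrib_left[symmetric])

lemma Vr_shift:
  assumes "okc c" shows "Vr c (\<lambda>s. a s + k) = Vr c a + k"
proof (rule antisym)
  show "Vr c (\<lambda>s. a s + k) \<le> Vr c a + k"
    by (rule Vr_le[OF assms]) (use Vr_ge[OF assms] ip_shift in fastforce)
  have "Vr c a \<le> Vr c (\<lambda>s. a s + k) - k"
  proof (rule Vr_le[OF assms])
    fix p x assume "p \<in> DeltaS" "c p = ereal x"
    thus "ip a p - x \<le> Vr c (\<lambda>s. a s + k) - k"
      using Vr_ge[OF assms, of p x "\<lambda>s. a s + k"] ip_shift[of p a k] by simp
  qed
  thus "Vr c a + k \<le> Vr c (\<lambda>s. a s + k)" by simp
qed

lemma grounded_okc: "cost_fun c \<Longrightarrow> grounded c \<Longrightarrow> okc c"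
proof -
  assume a: "cost_fun c" "grounded c"
  have "(INF p\<in>DeltaS. c p) < 1" using a(2) unfolding grounded_def by simp
  then obtain p where "p \<in> DeltaS" "c p < 1" by (auto simp: INF_less_iff)
  moreover have "(1::ereal) < \<infinity>" by simp
  ultimately show ?thesis using a(1) unfolding okc_def cost_fun_def by (meson less_trans)
qed

lemma Vr_const:
  assumes "cost_fun c" "grounded c" shows "Vr c (\<lambda>s. k) = k"
proof -
  have ok: "okc c" using grounded_okc assms .
  have ipc: "p \<in> DeltaS \<Longrightarrow> ip (\<lambda>s. k) p = k" for p
    unfolding ip_def DeltaS_def by (simp add: sum_distrib_left[symmetric])
  show ?thesis
  proof (rule antisym)
    show "Vr c (\<lambda>s. k) \<le> k"
    proof (rule Vr_le[OF ok])
      fix p x assume px: "p \<in> DeltaS" "c p = ereal x"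
      hence "0 \<le> x" using assms(1) unfolding cost_fun_def by force
      thus "ip (\<lambda>s. k) p - x \<le> k" using ipc[OF px(1)] by simp
    qed
    show "k \<le> Vr c (\<lambda>s. k)"
    proof (rule field_le_epsilon)
      fix e :: real assume e: "0 < e"
      have "(INF p\<in>DeltaS. c p) < ereal e" using assms(2) e unfolding grounded_def by simp
      then obtain p where p: "p \<in> DeltaS" "c p < ereal e" by (auto simp: INF_less_iff)
      have "0 \<le> c p" using assms(1) p unfolding cost_fun_def by auto
      then obtain x where x: "c p = ereal x" using p by (cases "c p") auto
      have "k - x \<le> Vr c (\<lambda>s. k)" using Vr_ge[OF ok p(1) x, of "\<lambda>s. k"] ipc[OF p(1)] by simp
      thus "k \<le> Vr c (\<lambda>s. k) + e" using p x by simp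
    qed
  qed
qed

lemma rep_value_Vr: "okc c \<Longrightarrow> rep_value c u w = ereal (Vr c (\<lambda>s. EU u (w s)))"
  using Vf_finite[of c "\<lambda>s. EU u (w s)"] unfolding rep_value_def Vf_def ip_def by simp



definition EUv :: "(real \<Rightarrow> real) \<Rightarrow> ('s \<Rightarrow> real pmf) \<Rightarrow> ('s \<Rightarrow> real)" where
  "EUv u w = (\<lambda>s. EU u (w s))"

lemma adm_okc: "admissible_cost c \<Longrightarrow> okc c"
  unfolding admissible_cost_def using grounded_okc by blast

lemma rep_R:
  assumes "parsimonious_rep P pi0 pi1 R c u" "w \<in> contracts P" "w' \<in> contracts P"
  shows "R w w' \<longleftrightarrow> Vr c (EUv u w') \<le> Vr c (EUv u w)"
proof -
  have "okc c" using assms(1) adm_okc unfolding parsimonious_rep_def by blast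
  thus ?thesis using assms unfolding parsimonious_rep_def
    by (simp add: rep_value_Vr EUv_def)
qed

lemma rep_pref_Vr:
  assumes "okc c"
  shows "rep_pref c u w w' \<longleftrightarrow> Vr c (EUv u w') \<le> Vr c (EUv u w)"
  using assms unfolding rep_pref_def by (simp add: rep_value_Vr EUv_def)

lemma const_in_contracts: "x \<in> lotteries P \<Longrightarrow> const_contract x \<in> contracts P"
  unfolding contracts_def const_contract_def by auto

lemma EUv_const: "EUv u (const_contract x) = (\<lambda>s. EU u x)"
  unfolding EUv_def const_contract_def by simp

lemma Vr_const_adm: "admissible_cost c \<Longrightarrow> Vr c (\<lambda>s. k) = k"
  unfolding admissible_cost_def using Vr_const by blast

lemma rep_R_const:
  assumes "parsimonious_rep P pi0 pi1 R c u" "x \<in> lotteries P" "y \<in> lotteries P"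
  shows "R (const_contract x) (const_contract y) \<longleftrightarrow> EU u y \<le> EU u x"
proof -
  have adm: "admissible_cost c" using assms(1) unfolding parsimonious_rep_def by blast
  show ?thesis
    using rep_R[OF assms(1) const_in_contracts[OF assms(2)] const_in_contracts[OF assms(3)]]
    by (simp add: EUv_const Vr_const_adm[OF adm])
qed

lemma rep_R_strict_const:
  assumes "parsimonious_rep P pi0 pi1 R c u" "x \<in> lotteries P" "y \<in> lotteries P"
  shows "strict_pref R (const_contract x) (const_contract y) \<longleftrightarrow> EU u y < EU u x"
  using rep_R_const[OF assms(1,2,3)] rep_R_const[OF assms(1,3,2)]
  unfolding strict_pref_def by auto

lemma lot_fin: "x \<in> lotteries P \<Longrightarrow> finite (set_pmf x)"
  unfolding lotteries_def by auto

lemma EU_mix_lot: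
  "x \<in> lotteries P \<Longrightarrow> y \<in> lotteries P \<Longrightarrow> 0 \<le> a \<Longrightarrow> a \<le> 1 \<Longrightarrow>
   EU u (lot_mix a x y) = a * EU u x + (1 - a) * EU u y"
  using EU_mix lot_fin by blast

lemma realize:
  assumes rep: "parsimonious_rep P pi0 pi1 R c u" and unb: "unbounded P R"
  shows "\<exists>x\<in>lotteries P. EU u x = k"
proof -
  obtain x y where xy: "x \<in> lotteries P" "y \<in> lotteries P"
    "strict_pref R (const_contract x) (const_contract y)"
    and H: "\<And>a. 0 < a \<Longrightarrow> a < 1 \<Longrightarrow> (\<exists>z\<in>lotteries P. \<exists>z'\<in>lotteries P.
         strict_pref R (const_contract y) (const_contract (lot_mix a z x)) \<and>
         strict_pref R (const_contract (lot_mix a z' y)) (const_contract x))"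
    using unb unfolding unbounded_def by blast
  define D where "D = EU u x - EU u y"
  have D: "D > 0" using rep_R_strict_const[OF rep xy(1,2)] xy(3) by (simp add: D_def)
  have low: "\<exists>z\<in>lotteries P. EU u z < K" for K
  proof -
    define a where "a = D / (\<bar>EU u x - K\<bar> + D + 1)"
    have a: "0 < a" "a < 1" using D by (auto simp: a_def field_simps)
    obtain z where z: "z \<in> lotteries P"
      "strict_pref R (const_contract y) (const_contract (lot_mix a z x))"
      using H[OF a] by blast
    have "EU u (lot_mix a z x) < EU u y"
      using rep_R_strict_const[OF rep xy(2) lotteries_mix[OF z(1) xy(1)]] z(2) by simp
    hence "a * EU u z + (1 - a) * EU u x < EU u y"
      using EU_mix_lot[OF z(1) xy(1), of a u] a by simp
    hence "a * (EU u z - EU u x) < - D" by (simp add: D_def algebra_simps)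
    hence "EU u z - EU u x < - (D / a)" using a by (simp add: field_simps)
    moreover have "D / a = \<bar>EU u x - K\<bar> + D + 1" using D by (simp add: a_def)
    ultimately have "EU u z < K" using abs_ge_self[of "EU u x - K"] D by linarith
    thus ?thesis using z(1) by blast
  qed
  have high: "\<exists>z\<in>lotteries P. EU u z > K" for K
  proof -
    define a where "a = D / (\<bar>K - EU u y\<bar> + D + 1)"
    have a: "0 < a" "a < 1" using D by (auto simp: a_def field_simps)
    obtain z where z: "z \<in> lotteries P"
      "strict_pref R (const_contract (lot_mix a z y)) (const_contract x)"
      using H[OF a] by blast
    have "EU u x < EU u (lot_mix a z y)"
      using rep_R_strict_const[OF rep lotteries_mix[OF z(1) xy(2)] xy(1)] z(2) by simp
    hence "EU u x < a * EU u z + (1 - a) * EU u y"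
      using EU_mix_lot[OF z(1) xy(2), of a u] a by simp
    hence "a * (EU u z - EU u y) > D" by (simp add: D_def algebra_simps)
    hence "EU u z - EU u y > D / a" using a by (simp add: field_simps)
    moreover have "D / a = \<bar>K - EU u y\<bar> + D + 1" using D by (simp add: a_def)
    ultimately have "EU u z > K" using abs_ge_self[of "K - EU u y"] D by linarith
    thus ?thesis using z(1) by blast
  qed
  obtain z1 where z1: "z1 \<in> lotteries P" "EU u z1 < k" using low by blast
  obtain z2 where z2: "z2 \<in> lotteries P" "EU u z2 > k" using high by blast
  define b where "b = (k - EU u z1) / (EU u z2 - EU u z1)"
  have b: "0 \<le> b" "b \<le> 1" using z1 z2 by (auto simp: b_def field_simps)
  have "EU u (lot_mix b z2 z1) = b * EU u z2 + (1 - b) * EU u z1"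
    using EU_mix_lot[OF z2(1) z1(1) b] .
  also have "\<dots> = EU u z1 + b * (EU u z2 - EU u z1)" by (simp add: algebra_simps)
  also have "b * (EU u z2 - EU u z1) = k - EU u z1" using z1 z2 by (simp add: b_def)
  hence "EU u z1 + b * (EU u z2 - EU u z1) = k" by simp
  finally show ?thesis using lotteries_mix[OF z2(1) z1(1)] by blast
qed

lemma realize_contract:
  assumes rep: "parsimonious_rep P pi0 pi1 R c u" and unb: "unbounded P R"
  shows "\<exists>w\<in>contracts P. EUv u w = a"
proof -
  define w where "w s = (SOME x. x \<in> lotteries P \<and> EU u x = a s)" for s
  have "w s \<in> lotteries P \<and> EU u (w s) = a s" for s
    unfolding w_def by (rule someI_ex) (use realize[OF rep unb] in blast)
  thus ?thesis unfolding contracts_def EUv_def by (intro bexI[of _ w]) auto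
qed

lemma norm_vals:
  assumes "parsimonious_rep P pi0 pi1 R c u" "pi0 \<in> P" "pi1 \<in> P" "pi0 < pi1"
  shows "u pi0 = 0" "u pi1 = 1"
proof -
  have "u pi0 < u pi1" using assms unfolding parsimonious_rep_def strict_mono_on_def by blast
  moreover have "{u pi0, u pi1} = {0, 1}" using assms unfolding parsimonious_rep_def normalised_def by blast
  ultimately show "u pi0 = 0" "u pi1 = 1" by (auto simp: doubleton_eq_iff)
qed

lemma u_unique:
  assumes r1: "parsimonious_rep P pi0 pi1 R c u" and r2: "parsimonious_rep P pi0 pi1 R c' u'"
    and p: "pi0 \<in> P" "pi1 \<in> P" "pi0 < pi1" and z: "z \<in> lotteries P"
  shows "EU u' z = EU u z"
proof -
  have ord: "EU u y \<le> EU u x \<longleftrightarrow> EU u' y \<le> EU u' x" if "x \<in> lotteries P" "y \<in> lotteries P" for x y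
    using rep_R_const[OF r1 that] rep_R_const[OF r2 that] by simp
  have eq: "EU u x = EU u y \<Longrightarrow> EU u' x = EU u' y" if "x \<in> lotteries P" "y \<in> lotteries P" for x y
    using ord[OF that] ord[OF that(2,1)] by auto
  have n1: "u pi0 = 0" "u pi1 = 1" using norm_vals[OF r1 p] by auto
  have n2: "u' pi0 = 0" "u' pi1 = 1" using norm_vals[OF r2 p] by auto
  define r0 where "r0 = return_pmf pi0"
  define r1' where "r1' = return_pmf pi1"
  have l0: "r0 \<in> lotteries P" "r1' \<in> lotteries P" using p lotteries_return by (auto simp: r0_def r1'_def)
  have e0: "EU u r0 = 0" "EU u r1' = 1" "EU u' r0 = 0" "EU u' r1' = 1"
    using n1 n2 by (auto simp: r0_def r1'_def EU_return)
  define k where "k = EU u z"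
  consider "0 \<le> k \<and> k \<le> 1" | "k > 1" | "k < 0" by linarith
  thus ?thesis
  proof cases
    case 1
    define m where "m = lot_mix k r1' r0"
    have ml: "m \<in> lotteries P" using lotteries_mix l0 by (simp add: m_def)
    have "EU u m = k" using EU_mix_lot[OF l0(2) l0(1), of k u] 1 e0 by (simp add: m_def)
    hence "EU u' m = EU u' z" using eq[OF ml z] by (simp add: k_def)
    moreover have "EU u' m = k" using EU_mix_lot[OF l0(2) l0(1), of k u'] 1 e0 by (simp add: m_def)
    ultimately show ?thesis by (simp add: k_def)
  next
    case 2
    define m where "m = lot_mix (1/k) z r0"
    have ml: "m \<in> lotteries P" using lotteries_mix l0 z by (simp add: m_def)
    have "EU u m = 1" using EU_mix_lot[OF z l0(1), of "1/k" u] 2 e0 by (simp add: m_def k_def)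
    hence "EU u' m = EU u' r1'" using eq[OF ml l0(2)] e0 by simp
    moreover have "EU u' m = (1/k) * EU u' z" using EU_mix_lot[OF z l0(1), of "1/k" u'] 2 e0 by (simp add: m_def)
    ultimately show ?thesis using 2 e0 by (simp add: k_def field_simps)
  next
    case 3
    define m where "m = lot_mix (1/(1-k)) z r1'"
    have ml: "m \<in> lotteries P" using lotteries_mix l0 z by (simp add: m_def)
    have "EU u m = (1/(1-k)) * k + (1 - 1/(1-k)) * 1"
      using EU_mix_lot[OF z l0(2), of "1/(1-k)" u] 3 e0 by (simp add: m_def k_def)
    also have "\<dots> = 0" using 3 by (simp add: field_simps)
    finally have "EU u' m = EU u' r0" using eq[OF ml l0(1)] e0 by simp
    moreover have "EU u' m = (1/(1-k)) * EU u' z + (1 - 1/(1-k))"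
      using EU_mix_lot[OF z l0(2), of "1/(1-k)" u'] 3 e0 by (simp add: m_def)
    ultimately have "(1/(1-k)) * EU u' z + (1 - 1/(1-k)) = 0" using e0 by simp
    thus ?thesis using 3 by (simp add: k_def field_simps)
  qed
qed

lemma EUv_unique:
  assumes "parsimonious_rep P pi0 pi1 R c u" "parsimonious_rep P pi0 pi1 R c' u'"
    "pi0 \<in> P" "pi1 \<in> P" "pi0 < pi1" "w \<in> contracts P"
  shows "EUv u' w = EUv u w"
  using u_unique[OF assms(1-5)] assms(6) unfolding EUv_def contracts_def by auto



lemma abel_aux:
  fixes A :: "'s::linorder set" and r d :: "'s \<Rightarrow> real"
  assumes "finite A"
  shows "(\<forall>t. 0 \<le> (\<Sum>s\<in>A \<inter> {s. t \<le> s}. r s)) \<longrightarrow> (\<forall>s\<in>A. 0 \<le> d s) \<longrightarrow>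
         (\<forall>s\<in>A. \<forall>s'\<in>A. s \<le> s' \<longrightarrow> d s \<le> d s') \<longrightarrow> 0 \<le> (\<Sum>s\<in>A. d s * r s)"
  using assms
proof (induction A arbitrary: d rule: finite_linorder_min_induct)
  case empty thus ?case by simp
next
  case (insert b A)
  show ?case
  proof (intro impI)
    assume tl: "\<forall>t. 0 \<le> (\<Sum>s\<in>insert b A \<inter> {s. t \<le> s}. r s)"
      and dn: "\<forall>s\<in>insert b A. 0 \<le> d s"
      and dm: "\<forall>s\<in>insert b A. \<forall>s'\<in>insert b A. s \<le> s' \<longrightarrow> d s \<le> d s'"
    have bA: "b \<notin> A" using insert by auto
    have "insert b A \<inter> {s. b \<le> s} = insert b A" using insert by auto
    hence t0: "0 \<le> (\<Sum>s\<in>insert b A. r s)" using tl by metis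
    have tlA: "\<forall>t. 0 \<le> (\<Sum>s\<in>A \<inter> {s. t \<le> s}. r s)"
    proof
      fix t
      show "0 \<le> (\<Sum>s\<in>A \<inter> {s. t \<le> s}. r s)"
      proof (cases "b < t")
        case True
        hence "A \<inter> {s. t \<le> s} = insert b A \<inter> {s. t \<le> s}" by auto
        thus ?thesis using tl by metis
      next
        case False
        hence eqA: "A \<inter> {s. t \<le> s} = A" using insert by force
        show ?thesis
        proof (cases "A = {}")
          case True thus ?thesis by simp
        next
          case False
          have "Min A \<in> A" using False insert by simp
          hence "insert b A \<inter> {s. Min A \<le> s} = A" using insert Min_le bA by force
          thus ?thesis using tl eqA by metis
        qed
      qed
    qed
    have dbs: "\<forall>s\<in>A. d b \<le> d s" using dm insert(2) by (auto simp: less_imp_le)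
    have "0 \<le> (\<Sum>s\<in>A. (d s - d b) * r s)"
      using insert.IH[of "\<lambda>s. d s - d b"] tlA dm dbs by auto
    moreover have "0 \<le> d b * (\<Sum>s\<in>insert b A. r s)" using dn t0 by simp
    moreover have "(\<Sum>s\<in>insert b A. d s * r s) = d b * (\<Sum>s\<in>insert b A. r s) + (\<Sum>s\<in>A. (d s - d b) * r s)"
      using bA insert by (simp add: algebra_simps sum.distrib sum_distrib_left sum_subtractf)
    ultimately show "0 \<le> (\<Sum>s\<in>insert b A. d s * r s)" by simp
  qed
qed

lemma fosd_ip:
  fixes p q :: "'s::{finite,linorder} \<Rightarrow> real"
  assumes "p \<in> DeltaS" "q \<in> DeltaS" "fosd q p" "mono d"
  shows "ip d p \<le> ip d q"
proof -
  define m where "m = d (Min UNIV)"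
  have tl: "\<forall>t. 0 \<le> (\<Sum>s\<in>UNIV \<inter> {s. t \<le> s}. q s - p s)"
    using assms(3) unfolding fosd_def by (simp add: sum_subtractf)
  have "0 \<le> (\<Sum>s\<in>UNIV. (d s - m) * (q s - p s))"
    using abel_aux[of UNIV "\<lambda>s. q s - p s" "\<lambda>s. d s - m"] tl assms(4)
    by (auto simp: m_def monoD)
  moreover have "(\<Sum>s\<in>UNIV. (d s - m) * (q s - p s)) = ip d q - ip d p - m * ((\<Sum>s\<in>UNIV. q s) - (\<Sum>s\<in>UNIV. p s))"
    unfolding ip_def by (simp add: algebra_simps sum_subtractf sum.distrib sum_distrib_left)
  moreover have "(\<Sum>s\<in>UNIV. q s) = 1" "(\<Sum>s\<in>UNIV. p s) = 1" using assms unfolding DeltaS_def by auto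
  ultimately show ?thesis by simp
qed

lemma okc_fin: "okc c \<Longrightarrow> p \<in> DeltaS \<Longrightarrow> c p < \<infinity> \<Longrightarrow> \<exists>x. c p = ereal x \<and> 0 \<le> x"
  unfolding okc_def by (cases "c p") auto

lemma Vr_mono_cost:
  assumes "okc c" "okc c'" "\<forall>p\<in>DeltaS. c p \<le> c' p"
  shows "Vr c' a \<le> Vr c a"
proof (rule Vr_le[OF assms(2)])
  fix p x assume p: "p \<in> DeltaS" "c' p = ereal x"
  have "c p \<le> ereal x" using assms(3) p by auto
  hence "c p < \<infinity>" using le_less_trans by fastforce
  then obtain y where y: "c p = ereal y" using okc_fin[OF assms(1) p(1)] by auto
  have "y \<le> x" using assms(3) p y by force
  thus "ip a p - x \<le> Vr c a" using Vr_ge[OF assms(1) p(1) y, of a] by simp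
qed

lemma upshift_ineq:
  fixes c c' :: "('s::{finite,linorder} \<Rightarrow> real) \<Rightarrow> ereal"
  assumes ok: "okc c" "okc c'" and up: "up_shifted c c'" and d: "mono (\<lambda>s. a s - b s)"
  shows "Vr c b + Vr c' a \<le> Vr c a + Vr c' b"
proof -
  have "Vr c b \<le> Vr c a + Vr c' b - Vr c' a"
  proof (rule Vr_le[OF ok(1)])
    fix P x assume P: "P \<in> DeltaS" "c P = ereal x"
    have "Vr c' a \<le> Vr c a + Vr c' b - ip b P + x"
    proof (rule Vr_le[OF ok(2)])
      fix P' x' assume P': "P' \<in> DeltaS" "c' P' = ereal x'"
      obtain q q' where q: "q \<in> DeltaS" "q' \<in> DeltaS" "fosd P q'" "fosd q P'"
        "(\<lambda>s. P s / 2 + P' s / 2) = (\<lambda>s. q s / 2 + q' s / 2)" "c q + c' q' \<le> c P + c' P'"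
        using up P(1) P'(1) unfolding up_shifted_def by blast
      have sum: "q' s = P s + P' s - q s" for s
      proof -
        have "P s / 2 + P' s / 2 = q s / 2 + q' s / 2" using fun_cong[OF q(5), of s] by simp
        thus ?thesis by linarith
      qed
      have "c q + c' q' \<le> ereal (x + x')" using q(6) P(2) P'(2) by simp
      moreover have "0 \<le> c q" "0 \<le> c' q'" using ok q unfolding okc_def by auto
      ultimately obtain y y' where y: "c q = ereal y" "c' q' = ereal y'" "y + y' \<le> x + x'"
        by (cases "c q"; cases "c' q'") auto
      have v1: "ip a q - y \<le> Vr c a" using Vr_ge[OF ok(1) q(1) y(1)] .
      have v2: "ip b q' - y' \<le> Vr c' b" using Vr_ge[OF ok(2) q(2) y(2)] .
      have "ip (\<lambda>s. a s - b s) P' \<le> ip (\<lambda>s. a s - b s) q" using fosd_ip[OF P'(1) q(1) q(4) d] .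
      moreover have "ip b q' = ip b P + ip b P' - ip b q"
        unfolding ip_def sum by (simp add: algebra_simps sum.distrib sum_subtractf)
      moreover have "ip (\<lambda>s. a s - b s) P' = ip a P' - ip b P'" "ip (\<lambda>s. a s - b s) q = ip a q - ip b q"
        unfolding ip_def by (simp_all add: algebra_simps sum_subtractf)
      ultimately show "ip a P' - x' \<le> Vr c a + Vr c' b - ip b P + x"
        using v1 v2 y(3) by linarith
    qed
    thus "ip b P - x \<le> Vr c a + Vr c' b - Vr c' a" by linarith
  qed
  thus ?thesis by linarith
qed

lemma steeper_mono:
  assumes rep: "parsimonious_rep P pi0 pi1 R c u" and w: "w \<in> contracts P" "w' \<in> contracts P"
  shows "steeper R w w' \<longleftrightarrow> mono (\<lambda>s. EUv u w s - EUv u w' s)"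
proof -
  have lot: "w s \<in> lotteries P" "w' s \<in> lotteries P" for s using w unfolding contracts_def by auto
  have "R (const_contract (lot_mix (1/2) (w s) (w' s'))) (const_contract (lot_mix (1/2) (w s') (w' s)))
     \<longleftrightarrow> EUv u w s' - EUv u w' s' \<le> EUv u w s - EUv u w' s" for s s'
    using rep_R_const[OF rep lotteries_mix[OF lot(1) lot(2)] lotteries_mix[OF lot(1) lot(2)]]
      EU_mix_lot[OF lot(1) lot(2), of "1/2"] unfolding EUv_def by auto
  thus ?thesis unfolding steeper_def mono_def by auto
qed



lemma vec_conv:
  fixes X :: "nat \<Rightarrow> real^'s" assumes "X \<longlonglongrightarrow> x"
  shows "(\<lambda>n. vec_nth (X n)) \<longlonglongrightarrow> vec_nth x"
proof -
  have c: "continuous_on UNIV (\<lambda>x::real^'s. vec_nth x)"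
    by (rule continuous_on_coordinatewise_then_product)
       (rule linear_continuous_on[OF bounded_linear_vec_nth])
  show ?thesis using continuous_on_tendsto_compose[OF c assms] by (simp add: o_def)
qed

definition DV :: "(real^'s::finite) set" where "DV = {x. vec_nth x \<in> DeltaS}"

lemma DV_closed: "closed (DV :: (real^'s::finite) set)"
proof -
  have "DV = (\<Inter>i. {x::real^'s. 0 \<le> x $ i}) \<inter> {x. (\<Sum>i\<in>UNIV. x $ i) = 1}"
    unfolding DV_def DeltaS_def by auto
  moreover have "closed {x::real^'s. (\<Sum>i\<in>UNIV. x $ i) = 1}"
    by (intro closed_Collect_eq continuous_intros)
  moreover have "closed {x::real^'s. 0 \<le> x $ i}" for i
    by (intro closed_Collect_le continuous_intros)
  moreover have "closed (\<Inter>i. {x::real^'s. 0 \<le> x $ i})"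
    using calculation(3) by (intro closed_INT) auto
  ultimately show ?thesis by (metis closed_Int)
qed

lemma DV_compact: "compact (DV :: (real^'s::finite) set)"
proof -
  have "bounded (DV :: (real^'s) set)"
  proof -
    have "norm x \<le> real CARD('s)" if "x \<in> DV" for x :: "real^'s"
    proof -
      have "norm x \<le> (\<Sum>i\<in>UNIV. \<bar>x$i\<bar>)" by (rule norm_le_l1_cart)
      also have "\<dots> \<le> (\<Sum>i\<in>(UNIV::'s set). 1)"
        using DeltaS_le1[of "vec_nth x"] that unfolding DV_def by (intro sum_mono) auto
      finally show ?thesis by simp
    qed
    thus ?thesis unfolding bounded_iff by blast
  qed
  thus ?thesis using DV_closed by (simp add: compact_eq_bounded_closed)
qed

lemma vec_nth_chi: "vec_nth (vec_lambda f) = f" by (rule ext) simp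

lemma liminf_le_lim:
  fixes f :: "nat \<Rightarrow> ereal"
  assumes "\<And>n. f n \<le> ereal (v n)" "v \<longlonglongrightarrow> v0"
  shows "liminf f \<le> ereal v0"
proof -
  have "liminf f \<le> liminf (\<lambda>n. ereal (v n))" using assms(1) by (intro Liminf_mono) auto
  also have "\<dots> = ereal v0" by (rule lim_imp_Liminf) (use assms(2) in auto)
  finally show ?thesis .
qed

lemma DeltaS_mix: "p \<in> DeltaS \<Longrightarrow> q \<in> DeltaS \<Longrightarrow> 0 \<le> u \<Longrightarrow> u \<le> 1 \<Longrightarrow>
   (\<lambda>s. u * p s + (1 - u) * q s) \<in> DeltaS"
  unfolding DeltaS_def by (auto simp: sum.distrib sum_distrib_left[symmetric])

lemma convex_real:
  assumes cv: "convex_cost c" and nn: "\<forall>p\<in>DeltaS. 0 \<le> c p"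
    and p: "p \<in> DeltaS" "q \<in> DeltaS" and v: "c p \<le> ereal v1" "c q \<le> ereal v2"
    and u: "0 \<le> u" "u \<le> 1"
  shows "c (\<lambda>s. u * p s + (1 - u) * q s) \<le> ereal (u * v1 + (1 - u) * v2)"
proof -
  obtain y1 where y1: "c p = ereal y1" "y1 \<le> v1" using v(1) nn p(1) by (cases "c p") auto
  obtain y2 where y2: "c q = ereal y2" "y2 \<le> v2" using v(2) nn p(2) by (cases "c q") auto
  have "c (\<lambda>s. u * p s + (1 - u) * q s) \<le> ereal u * c p + ereal (1 - u) * c q"
    using cv p u unfolding convex_cost_def by blast
  also have "\<dots> = ereal (u * y1 + (1 - u) * y2)" using y1 y2 by simp
  also have "\<dots> \<le> ereal (u * v1 + (1 - u) * v2)"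
    using y1 y2 u by (simp add: add_mono mult_left_mono)
  finally show ?thesis .
qed

lemma lsc_vec:
  fixes X :: "nat \<Rightarrow> real^'s::finite"
  assumes "lsc_cost c" "X \<longlonglongrightarrow> x" "\<And>n. X n \<in> DV" "x \<in> DV"
  shows "c (vec_nth x) \<le> liminf (\<lambda>n. c (vec_nth (X n)))"
proof -
  have "\<forall>n. vec_nth (X n) \<in> DeltaS" "vec_nth x \<in> DeltaS" using assms(3,4) by (auto simp: DV_def)
  moreover have H: "\<forall>p\<in>DeltaS. \<forall>X. (\<forall>n. X n \<in> DeltaS) \<and> X \<longlonglongrightarrow> p \<longrightarrow> c p \<le> liminf (\<lambda>n. c (X n))"
    using assms(1) unfolding lsc_cost_def by blast
  ultimately show ?thesis using vec_conv[OF assms(2)]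
    by (intro H[rule_format, of "vec_nth x" "\<lambda>n. vec_nth (X n)", simplified]) auto
qed

lemma inner_vec_ip: "inner (l::real^'s::finite) x = ip (vec_nth l) (vec_nth x)"
  unfolding inner_vec_def ip_def by simp

lemma part1_core:
  fixes c cstar :: "('s::finite \<Rightarrow> real) \<Rightarrow> ereal"
  assumes ok: "okc c" "okc cstar" and cv: "convex_cost c" and lsc: "lsc_cost c"
    and p0: "p0 \<in> DeltaS" "cstar p0 = ereal M" "ereal M < c p0"
  shows "\<exists>a. Vr c a < Vr cstar a"
proof -
  have nn: "\<forall>p\<in>DeltaS. 0 \<le> c p" using ok(1) unfolding okc_def by blast
  define E where "E = {(x::real^'s, v). x \<in> DV \<and> c (vec_nth x) \<le> ereal v}"
  have cvx: "convex E"
    unfolding convex_def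
  proof (intro ballI allI impI)
    fix xv yw :: "(real^'s) \<times> real" and u v :: real
    assume xv: "xv \<in> E" and yw: "yw \<in> E" and uv: "0 \<le> u" "0 \<le> v" "u + v = 1"
    obtain x1 v1 where 1: "xv = (x1,v1)" "x1 \<in> DV" "c (vec_nth x1) \<le> ereal v1" using xv unfolding E_def by auto
    obtain x2 v2 where 2: "yw = (x2,v2)" "x2 \<in> DV" "c (vec_nth x2) \<le> ereal v2" using yw unfolding E_def by auto
    have vv: "v = 1 - u" using uv by simp
    have eq: "vec_nth (u *\<^sub>R x1 + v *\<^sub>R x2) = (\<lambda>s. u * vec_nth x1 s + (1 - u) * vec_nth x2 s)"
      by (rule ext) (simp add: vv)
    have "(\<lambda>s. u * vec_nth x1 s + (1 - u) * vec_nth x2 s) \<in> DeltaS"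
      using DeltaS_mix 1 2 uv vv unfolding DV_def by auto
    moreover have "c (\<lambda>s. u * vec_nth x1 s + (1 - u) * vec_nth x2 s) \<le> ereal (u * v1 + (1 - u) * v2)"
      using convex_real[OF cv nn, of "vec_nth x1" "vec_nth x2" v1 v2 u] 1 2 uv vv unfolding DV_def by auto
    ultimately show "u *\<^sub>R xv + v *\<^sub>R yw \<in> E" using 1 2 eq vv unfolding E_def DV_def by auto
  qed
  have cl: "closed E"
    unfolding closed_sequential_limits
  proof (intro allI impI, elim conjE)
    fix S :: "nat \<Rightarrow> (real^'s) \<times> real" and l assume S: "\<forall>n. S n \<in> E" "S \<longlonglongrightarrow> l"
    have f: "(\<lambda>n. fst (S n)) \<longlonglongrightarrow> fst l" "(\<lambda>n. snd (S n)) \<longlonglongrightarrow> snd l"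
      using S(2) by (auto intro: tendsto_fst tendsto_snd)
    have inD: "fst (S n) \<in> DV" "c (vec_nth (fst (S n))) \<le> ereal (snd (S n))" for n
      using S(1) unfolding E_def by (auto simp: case_prod_beta)
    have lD: "fst l \<in> DV"
      by (rule closed_sequentially[OF DV_closed, of "\<lambda>n. fst (S n)"]) (use inD f in auto)
    have "c (vec_nth (fst l)) \<le> liminf (\<lambda>n. c (vec_nth (fst (S n))))"
      by (rule lsc_vec[OF lsc f(1) inD(1) lD])
    also have "\<dots> \<le> ereal (snd l)" by (rule liminf_le_lim[OF inD(2) f(2)])
    finally show "l \<in> E" using lD unfolding E_def by (auto simp: case_prod_beta)
  qed
  have up: "\<And>x v w. (x,v) \<in> E \<Longrightarrow> v \<le> w \<Longrightarrow> (x,w) \<in> E"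
    unfolding E_def by (auto intro: order_trans)
  have nnE: "\<And>x v. (x,v) \<in> E \<Longrightarrow> 0 \<le> v"
  proof -
    fix x v assume "(x,v) \<in> E"
    hence "0 \<le> c (vec_nth x)" "c (vec_nth x) \<le> ereal v" using nn unfolding E_def DV_def by auto
    thus "0 \<le> v" by (metis ereal_less_eq(5) order_trans)
  qed
  have nin: "(vec_lambda p0, M) \<notin> E"
    using p0 unfolding E_def by (auto simp: vec_nth_chi)
  obtain l b where lb: "\<And>x v. (x,v) \<in> E \<Longrightarrow> inner l x + b \<le> v" "M < inner l (vec_lambda p0) + b"
  proof -
    have "\<exists>l b. (\<forall>x v. (x,v) \<in> E \<longrightarrow> inner l x + b \<le> v) \<and> M < inner l (vec_lambda p0) + b"
      by (rule sep_lemma[OF cvx cl]) (use up nnE nin in auto)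
    thus ?thesis using that by blast
  qed
  define a where "a = vec_nth l"
  have "Vr c a \<le> - b"
  proof (rule Vr_le[OF ok(1)])
    fix p x assume p: "p \<in> DeltaS" "c p = ereal x"
    have "(vec_lambda p, x) \<in> E" using p unfolding E_def DV_def by (simp add: vec_nth_chi)
    from lb(1)[OF this] show "ip a p - x \<le> - b" by (simp add: inner_vec_ip vec_nth_chi a_def)
  qed
  moreover have "ip a p0 - M \<le> Vr cstar a" by (rule Vr_ge[OF ok(2) p0(1,2)])
  moreover have "M < ip a p0 + b" using lb(2) by (simp add: inner_vec_ip vec_nth_chi a_def)
  ultimately show ?thesis by (intro exI[of _ a]) linarith
qed



definition tls :: "('s::{finite,linorder} \<Rightarrow> real) \<Rightarrow> 's \<Rightarrow> real" where
  "tls q t = (\<Sum>s\<in>{s. t \<le> s}. q s)"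

lemma tl_swap: "(\<Sum>t\<in>UNIV. l t * tls q t) = ip (\<lambda>s. \<Sum>t\<in>{t. t \<le> s}. l t) q"
proof -
  have "(\<Sum>t\<in>UNIV. l t * tls q t) = (\<Sum>t\<in>UNIV. \<Sum>s\<in>UNIV. if t \<le> s then l t * q s else 0)"
    unfolding tls_def by (simp add: sum_distrib_left sum.If_cases Int_def)
  also have "\<dots> = (\<Sum>s\<in>UNIV. \<Sum>t\<in>UNIV. if t \<le> s then l t * q s else 0)" by (rule sum.swap)
  also have "\<dots> = ip (\<lambda>s. \<Sum>t\<in>{t. t \<le> s}. l t) q"
    unfolding ip_def by (simp add: sum_distrib_right sum.If_cases Int_def)
  finally show ?thesis .
qed

lemma tl_mix: "tls (\<lambda>s. u * p s + v * q s) t = u * tls p t + v * tls q t"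
  unfolding tls_def by (simp add: sum.distrib sum_distrib_left)

lemma main_dual:
  fixes c1 c2 :: "('s::{finite,linorder} \<Rightarrow> real) \<Rightarrow> ereal"
  assumes ok: "okc c1" "okc c2" and cv: "convex_cost c1" "convex_cost c2"
    and lsc: "lsc_cost c1" "lsc_cost c2"
    and C: "\<And>a d. mono d \<Longrightarrow> Vr c1 a + Vr c2 (\<lambda>s. a s + d s) \<le> Vr c1 (\<lambda>s. a s + d s) + Vr c2 a"
    and p: "p \<in> DeltaS" "p' \<in> DeltaS" "c1 p = ereal x1" "c2 p' = ereal x2"
  shows "\<exists>q\<in>DeltaS. \<exists>q'\<in>DeltaS. (\<forall>t. tls p' t \<le> tls q t) \<and> (\<forall>s. q s + q' s = p s + p' s)
          \<and> c1 q + c2 q' \<le> ereal (x1 + x2)"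
proof (rule ccontr)
  assume neg: "\<not> ?thesis"
  have nn1: "\<forall>p\<in>DeltaS. 0 \<le> c1 p" and nn2: "\<forall>p\<in>DeltaS. 0 \<le> c2 p" using ok unfolding okc_def by auto
  define E where "E = {((y, z), v::real). \<exists>q q'. q \<in> DeltaS \<and> q' \<in> DeltaS \<and>
     (\<forall>t. y$t \<le> tls q t - tls p' t) \<and> (\<forall>s. z$s = q s + q' s - p s - p' s) \<and> c1 q + c2 q' \<le> ereal v}"
  have cvx: "convex E"
    unfolding convex_def
  proof (intro ballI allI impI)
    fix e1 e2 :: "(((real,'s) vec) \<times> ((real,'s) vec)) \<times> real" and u w :: real
    assume e1: "e1 \<in> E" and e2: "e2 \<in> E" and uw: "0 \<le> u" "0 \<le> w" "u + w = 1"
    obtain y1 z1 v1 q1 q1' where 1: "e1 = ((y1,z1),v1)" "q1 \<in> DeltaS" "q1' \<in> DeltaS"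
      "\<forall>t. y1$t \<le> tls q1 t - tls p' t" "\<forall>s. z1$s = q1 s + q1' s - p s - p' s" "c1 q1 + c2 q1' \<le> ereal v1"
      using e1 unfolding E_def by auto
    obtain y2 z2 v2 q2 q2' where 2: "e2 = ((y2,z2),v2)" "q2 \<in> DeltaS" "q2' \<in> DeltaS"
      "\<forall>t. y2$t \<le> tls q2 t - tls p' t" "\<forall>s. z2$s = q2 s + q2' s - p s - p' s" "c2 q2' + c1 q2 \<le> ereal v2"
      using e2 unfolding E_def by (auto simp: add.commute)
    have ww: "w = 1 - u" using uw by simp
    obtain a1 b1 where ab1: "c1 q1 = ereal a1" "c2 q1' = ereal b1" "a1 + b1 \<le> v1"
      using 1(6) nn1 nn2 1(2,3) by (cases "c1 q1"; cases "c2 q1'") auto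
    obtain a2 b2 where ab2: "c1 q2 = ereal a2" "c2 q2' = ereal b2" "a2 + b2 \<le> v2"
      using 2(6) nn1 nn2 2(2,3) by (cases "c1 q2"; cases "c2 q2'") auto
    define q where "q = (\<lambda>s. u * q1 s + (1 - u) * q2 s)"
    define q' where "q' = (\<lambda>s. u * q1' s + (1 - u) * q2' s)"
    have qD: "q \<in> DeltaS" "q' \<in> DeltaS" unfolding q_def q'_def
      using DeltaS_mix 1 2 uw ww by auto
    have cq: "c1 q \<le> ereal (u * a1 + (1 - u) * a2)" unfolding q_def
      by (rule convex_real[OF cv(1) nn1]) (use 1 2 ab1 ab2 uw ww in auto)
    have cq': "c2 q' \<le> ereal (u * b1 + (1 - u) * b2)" unfolding q'_def
      by (rule convex_real[OF cv(2) nn2]) (use 1 2 ab1 ab2 uw ww in auto)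
    have "u * a1 + (1 - u) * a2 + (u * b1 + (1 - u) * b2) = u * (a1 + b1) + (1 - u) * (a2 + b2)"
      by (simp add: algebra_simps)
    also have "\<dots> \<le> u * v1 + (1 - u) * v2" using ab1 ab2 uw ww by (intro add_mono mult_left_mono) auto
    finally have cs: "c1 q + c2 q' \<le> ereal (u * v1 + (1 - u) * v2)"
      using add_mono[OF cq cq'] by (metis ereal_less_eq(3) order_trans plus_ereal.simps(1))
    have ty: "(u *\<^sub>R y1 + w *\<^sub>R y2) $ t \<le> tls q t - tls p' t" for t
    proof -
      have "u * y1$t \<le> u * (tls q1 t - tls p' t)" using 1(4) uw by (intro mult_left_mono) auto
      moreover have "(1 - u) * y2$t \<le> (1 - u) * (tls q2 t - tls p' t)" using 2(4) uw ww by (intro mult_left_mono) auto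
      moreover have "tls q t = u * tls q1 t + (1 - u) * tls q2 t" unfolding q_def by (rule tl_mix)
      ultimately show ?thesis unfolding ww by (simp add: algebra_simps)
    qed
    have tz: "(u *\<^sub>R z1 + w *\<^sub>R z2) $ s = q s + q' s - p s - p' s" for s
    proof -
      have z12: "z1$s = q1 s + q1' s - p s - p' s" "z2$s = q2 s + q2' s - p s - p' s" using 1(5) 2(5) by auto
      show ?thesis unfolding q_def q'_def ww vector_add_component vector_scaleR_component z12
        by (simp add: algebra_simps)
    qed
    have ex: "\<exists>qa qb. qa \<in> DeltaS \<and> qb \<in> DeltaS \<and> (\<forall>t. (u *\<^sub>R y1 + w *\<^sub>R y2)$t \<le> tls qa t - tls p' t)
       \<and> (\<forall>s. (u *\<^sub>R z1 + w *\<^sub>R z2)$s = qa s + qb s - p s - p' s) \<and> c1 qa + c2 qb \<le> ereal (u * v1 + w * v2)"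
      using qD ty tz cs ww by blast
    show "u *\<^sub>R e1 + w *\<^sub>R e2 \<in> E"
      unfolding E_def using 1(1) 2(1) ex by simp
  qed
  have cl: "closed E"
    unfolding closed_sequential_limits
  proof (intro allI impI, elim conjE)
    fix S :: "nat \<Rightarrow> (((real,'s) vec) \<times> ((real,'s) vec)) \<times> real" and l assume S: "\<forall>n. S n \<in> E" "S \<longlonglongrightarrow> l"
    have "\<forall>n. \<exists>qq. fst qq \<in> DeltaS \<and> snd qq \<in> DeltaS \<and>
       (\<forall>t. (fst (fst (S n)))$t \<le> tls (fst qq) t - tls p' t) \<and> (\<forall>s. (snd (fst (S n)))$s = fst qq s + snd qq s - p s - p' s)
       \<and> c1 (fst qq) + c2 (snd qq) \<le> ereal (snd (S n))"
    proof
      fix n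
      obtain y z v where Sn: "S n = ((y,z),v)" by (metis prod.collapse)
      have "((y,z),v) \<in> E" using S(1) Sn by metis
      then obtain qa qb where qab: "qa \<in> DeltaS" "qb \<in> DeltaS" "\<forall>t. y $ t \<le> tls qa t - tls p' t"
        "\<forall>s. z $ s = qa s + qb s - p s - p' s" "c1 qa + c2 qb \<le> ereal v" unfolding E_def by auto
      show "\<exists>qq. fst qq \<in> DeltaS \<and> snd qq \<in> DeltaS \<and>
       (\<forall>t. (fst (fst (S n)))$t \<le> tls (fst qq) t - tls p' t) \<and> (\<forall>s. (snd (fst (S n)))$s = fst qq s + snd qq s - p s - p' s)
       \<and> c1 (fst qq) + c2 (snd qq) \<le> ereal (snd (S n))"
        using qab Sn by (intro exI[of _ "(qa,qb)"]) auto
    qed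
    then obtain QQ where QQ: "\<And>n. fst (QQ n) \<in> DeltaS" "\<And>n. snd (QQ n) \<in> DeltaS"
      "\<And>n t. (fst (fst (S n)))$t \<le> tls (fst (QQ n)) t - tls p' t"
      "\<And>n s. (snd (fst (S n)))$s = fst (QQ n) s + snd (QQ n) s - p s - p' s"
      "\<And>n. c1 (fst (QQ n)) + c2 (snd (QQ n)) \<le> ereal (snd (S n))"
      by metis
    define VQ where "VQ n = (vec_lambda (fst (QQ n)), vec_lambda (snd (QQ n)))" for n
    have VQin: "VQ n \<in> DV \<times> DV" for n using QQ(1,2) unfolding VQ_def DV_def by (simp add: vec_nth_chi)
    have "seq_compact (DV \<times> DV :: (((real,'s) vec) \<times> ((real,'s) vec)) set)"
      by (intro compact_imp_seq_compact compact_Times DV_compact)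
    then obtain L r where L: "L \<in> DV \<times> DV" "strict_mono r" "(VQ \<circ> r) \<longlonglongrightarrow> L"
      using VQin unfolding seq_compact_def by metis
    define q where "q = vec_nth (fst L)"
    define q' where "q' = vec_nth (snd L)"
    have qD: "q \<in> DeltaS" "q' \<in> DeltaS" using L(1) unfolding q_def q'_def DV_def by auto
    have Sr: "(S \<circ> r) \<longlonglongrightarrow> l" using LIMSEQ_subseq_LIMSEQ[OF S(2) L(2)] .
    have lim1: "(\<lambda>n. fst (VQ (r n))) \<longlonglongrightarrow> fst L" "(\<lambda>n. snd (VQ (r n))) \<longlonglongrightarrow> snd L"
      using L(3) by (auto simp: o_def intro: tendsto_fst tendsto_snd)
    have limY: "(\<lambda>n. fst (fst (S (r n)))) \<longlonglongrightarrow> fst (fst l)"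
      and limZ: "(\<lambda>n. snd (fst (S (r n)))) \<longlonglongrightarrow> snd (fst l)"
      and limV: "(\<lambda>n. snd (S (r n))) \<longlonglongrightarrow> snd l"
      using Sr by (auto simp: o_def intro!: tendsto_fst tendsto_snd)
    have cq: "\<And>n s. (fst (VQ n)) $ s = fst (QQ n) s" "\<And>n s. (snd (VQ n)) $ s = snd (QQ n) s"
      unfolding VQ_def by auto
    have limq: "(\<lambda>n. fst (QQ (r n)) s) \<longlonglongrightarrow> q s" for s
      using tendsto_vec_nth[OF lim1(1), of s] unfolding q_def cq .
    have limq': "(\<lambda>n. snd (QQ (r n)) s) \<longlonglongrightarrow> q' s" for s
      using tendsto_vec_nth[OF lim1(2), of s] unfolding q'_def cq .
    have ty: "(fst (fst l))$t \<le> tls q t - tls p' t" for t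
    proof (rule LIMSEQ_le[OF tendsto_vec_nth[OF limY, of t]])
      show "(\<lambda>n. tls (fst (QQ (r n))) t - tls p' t) \<longlonglongrightarrow> tls q t - tls p' t"
        unfolding tls_def by (intro tendsto_intros limq)
      show "\<exists>N. \<forall>n\<ge>N. fst (fst (S (r n))) $ t \<le> tls (fst (QQ (r n))) t - tls p' t" using QQ(3) by blast
    qed
    have tz: "(snd (fst l))$s = q s + q' s - p s - p' s" for s
    proof (rule LIMSEQ_unique[OF tendsto_vec_nth[OF limZ, of s]])
      have "(\<lambda>n. fst (QQ (r n)) s + snd (QQ (r n)) s - p s - p' s) \<longlonglongrightarrow> q s + q' s - p s - p' s"
        by (intro tendsto_intros limq limq')
      thus "(\<lambda>n. snd (fst (S (r n))) $ s) \<longlonglongrightarrow> q s + q' s - p s - p' s" using QQ(4) by simp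
    qed
    have VD: "fst (VQ (r n)) \<in> DV" "snd (VQ (r n)) \<in> DV" for n using VQin[of "r n"] by auto
    have LD: "fst L \<in> DV" "snd L \<in> DV" using L(1) by auto
    have vq: "vec_nth (fst (VQ n)) = fst (QQ n)" "vec_nth (snd (VQ n)) = snd (QQ n)" for n
      unfolding VQ_def by (auto simp: vec_nth_chi)
    have l1: "c1 q \<le> liminf (\<lambda>n. c1 (fst (QQ (r n))))"
      using lsc_vec[OF lsc(1) lim1(1) VD(1) LD(1)] unfolding q_def vq .
    have l2: "c2 q' \<le> liminf (\<lambda>n. c2 (snd (QQ (r n))))"
      using lsc_vec[OF lsc(2) lim1(2) VD(2) LD(2)] unfolding q'_def vq .
    have z1: "0 \<le> liminf (\<lambda>n. c1 (fst (QQ (r n))))"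
      using Liminf_mono[of "\<lambda>n. 0" "\<lambda>n. c1 (fst (QQ (r n)))" sequentially] nn1 QQ(1) by (simp add: Liminf_const)
    have z2: "0 \<le> liminf (\<lambda>n. c2 (snd (QQ (r n))))"
      using Liminf_mono[of "\<lambda>n. 0" "\<lambda>n. c2 (snd (QQ (r n)))" sequentially] nn2 QQ(2) by (simp add: Liminf_const)
    have "c1 q + c2 q' \<le> liminf (\<lambda>n. c1 (fst (QQ (r n)))) + liminf (\<lambda>n. c2 (snd (QQ (r n))))"
      by (rule add_mono[OF l1 l2])
    also have "\<dots> \<le> liminf (\<lambda>n. c1 (fst (QQ (r n))) + c2 (snd (QQ (r n))))"
      by (rule ereal_liminf_add_mono) (use z1 z2 in auto)
    also have "\<dots> \<le> ereal (snd l)" by (rule liminf_le_lim[OF QQ(5) limV])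
    finally have cs: "c1 q + c2 q' \<le> ereal (snd l)" .
    obtain y z v where "l = ((y,z),v)" by (metis prod.collapse)
    thus "l \<in> E" unfolding E_def using qD ty tz cs by auto
  qed
  have up: "\<And>x v w. (x,v) \<in> E \<Longrightarrow> v \<le> w \<Longrightarrow> (x,w) \<in> E"
    unfolding E_def by (force intro: order_trans)
  have nnE: "\<And>x v. (x,v) \<in> E \<Longrightarrow> 0 \<le> v"
  proof -
    fix x v assume "(x,v) \<in> E"
    then obtain q q' where "q \<in> DeltaS" "q' \<in> DeltaS" "c1 q + c2 q' \<le> ereal v" unfolding E_def by auto
    moreover hence "0 \<le> c1 q + c2 q'" using nn1 nn2 by auto
    ultimately show "0 \<le> v" by (metis ereal_less_eq(5) order_trans)
  qed
  have nin: "((0,0), x1 + x2) \<notin> E"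
  proof
    assume "((0,0), x1 + x2) \<in> E"
    then obtain q q' where qq: "q \<in> DeltaS" "q' \<in> DeltaS" "\<forall>t. 0 \<le> tls q t - tls p' t"
      "\<forall>s. 0 = q s + q' s - p s - p' s" "c1 q + c2 q' \<le> ereal (x1 + x2)" unfolding E_def by auto
    have "\<forall>t. tls p' t \<le> tls q t" using qq(3) by auto
    moreover have "\<forall>s. q s + q' s = p s + p' s"
    proof
      fix s show "q s + q' s = p s + p' s" using qq(4)[rule_format, of s] by linarith
    qed
    ultimately show False using neg qq(1,2,5) by blast
  qed
  obtain lam b where lb: "\<And>x v. (x,v) \<in> E \<Longrightarrow> inner lam x + b \<le> v" "x1 + x2 < inner lam (0,0) + b"
  proof -
    have "\<exists>l b. (\<forall>x v. (x,v) \<in> E \<longrightarrow> inner l x + b \<le> v) \<and> x1 + x2 < inner l (0,0) + b"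
      by (rule sep_lemma[OF cvx cl]) (use up nnE nin in auto)
    thus ?thesis using that by blast
  qed
  obtain ly lz where lam: "lam = (ly, lz)" by (cases lam)
  have bgt: "x1 + x2 < b" using lb(2) by (simp add: lam)
  have Ein: "((vec_lambda (\<lambda>t. tls q t - tls p' t) - yk, vec_lambda (\<lambda>s. q s + q' s - p s - p' s)), v) \<in> E"
    if "q \<in> DeltaS" "q' \<in> DeltaS" "\<forall>t. 0 \<le> yk $ t" "c1 q + c2 q' \<le> ereal v" for q q' yk v
  proof -
    have "\<exists>qa qb. qa \<in> DeltaS \<and> qb \<in> DeltaS \<and> (\<forall>t. (vec_lambda (\<lambda>t. tls q t - tls p' t) - yk)$t \<le> tls qa t - tls p' t)
       \<and> (\<forall>s. (vec_lambda (\<lambda>s. q s + q' s - p s - p' s))$s = qa s + qb s - p s - p' s) \<and> c1 qa + c2 qb \<le> ereal v"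
      using that by (intro exI[of _ q] exI[of _ q']) auto
    thus ?thesis unfolding E_def by simp
  qed
  have lpos: "0 \<le> ly $ t0" for t0
  proof (rule ccontr)
    assume "\<not> 0 \<le> ly $ t0"
    hence lt: "ly $ t0 < 0" by simp
    define Cc where "Cc = inner ly (vec_lambda (\<lambda>t. tls p t - tls p' t))"
    define k where "k = (\<bar>Cc\<bar> + 1) / (- ly $ t0)"
    have kp: "0 \<le> k" using lt unfolding k_def by (intro divide_nonneg_pos) auto
    define yk where "yk = (vec_lambda (\<lambda>t. if t = t0 then k else 0) :: (real,'s) vec)"
    have "((vec_lambda (\<lambda>t. tls p t - tls p' t) - yk, vec_lambda (\<lambda>s. p s + p' s - p s - p' s)), x1 + x2) \<in> E"
      by (rule Ein) (use p kp in \<open>auto simp: yk_def\<close>)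
    from lb(1)[OF this] have "inner ly (vec_lambda (\<lambda>t. tls p t - tls p' t) - yk) + b \<le> x1 + x2"
      by (simp add: lam inner_vec_def)
    moreover have "inner ly yk = ly $ t0 * k" unfolding yk_def inner_vec_def
      by (simp add: if_distrib cong: if_cong)
    moreover have "ly $ t0 * k = - (\<bar>Cc\<bar> + 1)" using lt by (simp add: k_def)
    ultimately have "Cc + \<bar>Cc\<bar> + 1 + b \<le> x1 + x2" by (simp add: inner_diff_right Cc_def)
    thus False using bgt abs_ge_minus_self[of Cc] by linarith
  qed
  define d where "d s = (\<Sum>t\<in>{t. t \<le> s}. ly $ t)" for s
  have md: "mono d" unfolding mono_def d_def
    by (intro allI impI sum_mono2) (auto simp: lpos)
  define al where "al = vec_nth lz"
  have key: "ip (\<lambda>s. al s + d s) q - y1 + (ip al q' - y2) \<le> ip d p' + ip al p + ip al p' - b"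
    if q: "q \<in> DeltaS" "q' \<in> DeltaS" "c1 q = ereal y1" "c2 q' = ereal y2" for q q' y1 y2
  proof -
    have "((vec_lambda (\<lambda>t. tls q t - tls p' t) - 0, vec_lambda (\<lambda>s. q s + q' s - p s - p' s)), y1 + y2) \<in> E"
      by (rule Ein) (use q in auto)
    from lb(1)[OF this]
    have "inner ly (vec_lambda (\<lambda>t. tls q t - tls p' t)) + inner lz (vec_lambda (\<lambda>s. q s + q' s - p s - p' s)) + b \<le> y1 + y2"
      by (simp add: lam)
    moreover have "inner ly (vec_lambda (\<lambda>t. tls q t - tls p' t)) = ip d q - ip d p'"
    proof -
      have "inner ly (vec_lambda (\<lambda>t. tls q t - tls p' t)) = (\<Sum>t\<in>UNIV. ly$t * tls q t) - (\<Sum>t\<in>UNIV. ly$t * tls p' t)"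
        unfolding inner_vec_def by (simp add: algebra_simps sum_subtractf)
      thus ?thesis unfolding tl_swap d_def .
    qed
    moreover have "inner lz (vec_lambda (\<lambda>s. q s + q' s - p s - p' s)) = ip al q + ip al q' - ip al p - ip al p'"
      unfolding inner_vec_def ip_def al_def by (simp add: algebra_simps sum.distrib sum_subtractf)
    moreover have "ip (\<lambda>s. al s + d s) q = ip al q + ip d q"
      unfolding ip_def by (simp add: algebra_simps sum.distrib)
    ultimately show ?thesis by linarith
  qed
  define K where "K = ip d p' + ip al p + ip al p' - b"
  have "Vr c1 (\<lambda>s. al s + d s) \<le> K - Vr c2 al"
  proof (rule Vr_le[OF ok(1)])
    fix q y1 assume q: "q \<in> DeltaS" "c1 q = ereal y1"
    have "Vr c2 al \<le> K - (ip (\<lambda>s. al s + d s) q - y1)"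
    proof (rule Vr_le[OF ok(2)])
      fix q' y2 assume q': "q' \<in> DeltaS" "c2 q' = ereal y2"
      show "ip al q' - y2 \<le> K - (ip (\<lambda>s. al s + d s) q - y1)"
        using key[OF q(1) q'(1) q(2) q'(2)] unfolding K_def by linarith
    qed
    thus "ip (\<lambda>s. al s + d s) q - y1 \<le> K - Vr c2 al" by linarith
  qed
  moreover have "Vr c1 al + Vr c2 (\<lambda>s. al s + d s) \<le> Vr c1 (\<lambda>s. al s + d s) + Vr c2 al" by (rule C[OF md])
  moreover have "ip al p - x1 \<le> Vr c1 al" by (rule Vr_ge[OF ok(1) p(1,3)])
  moreover have "ip (\<lambda>s. al s + d s) p' - x2 \<le> Vr c2 (\<lambda>s. al s + d s)" by (rule Vr_ge[OF ok(2) p(2,4)])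
  moreover have "ip (\<lambda>s. al s + d s) p' = ip al p' + ip d p'"
    unfolding ip_def by (simp add: algebra_simps sum.distrib)
  ultimately have "b \<le> x1 + x2" unfolding K_def by linarith
  thus False using bgt by linarith
qed



lemma zero_cost_ok:
  "okc (\<lambda>_. 0 :: ereal)" "convex_cost (\<lambda>_. 0 :: ereal)" "lsc_cost (\<lambda>_. 0 :: ereal)"
proof -
  show "okc (\<lambda>_. 0 :: ereal)" unfolding okc_def DeltaS_def
    by (auto intro!: exI[of _ "\<lambda>s. if s = undefined then 1 else 0"] simp: sum.delta)
  show "convex_cost (\<lambda>_. 0 :: ereal)" unfolding convex_cost_def by simp
  show "lsc_cost (\<lambda>_. 0 :: ereal)" unfolding lsc_cost_def by (simp add: Liminf_const)
qed

lemma tls_fosd: "fosd q p \<longleftrightarrow> (\<forall>t. tls p t \<le> tls q t)"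
  unfolding fosd_def tls_def by simp

lemma feas_to_fosd:
  assumes "\<forall>t. tls p' t \<le> tls q t" "\<forall>s. q s + q' s = p s + p' s"
  shows "fosd p q' \<and> fosd q p' \<and> (\<lambda>s. p s / 2 + p' s / 2) = (\<lambda>s. q s / 2 + q' s / 2)"
proof -
  have q': "q' = (\<lambda>s. p s + p' s - q s)"
  proof
    fix s show "q' s = p s + p' s - q s" using assms(2)[rule_format, of s] by linarith
  qed
  have tq: "tls q' t = tls p t + tls p' t - tls q t" for t
    unfolding q' tls_def by (simp add: sum.distrib sum_subtractf)
  have "\<forall>t. tls q' t \<le> tls p t"
  proof
    fix t show "tls q' t \<le> tls p t" using tq[of t] assms(1)[rule_format, of t] by linarith
  qed
  hence "fosd p q'" unfolding tls_fosd .
  moreover have "fosd q p'" using assms(1) unfolding tls_fosd .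
  moreover have "(\<lambda>s. p s / 2 + p' s / 2) = (\<lambda>s. q s / 2 + q' s / 2)"
    unfolding q' by (intro ext) (simp add: field_simps)
  ultimately show ?thesis by blast
qed

theorem corollary1:
  fixes Prizes :: "real set" and pi0 pi1 :: real
    and R :: "('s::{finite,linorder} \<Rightarrow> real pmf) \<Rightarrow> ('s \<Rightarrow> real pmf) \<Rightarrow> bool"
    and c cstar :: "('s \<Rightarrow> real) \<Rightarrow> ereal" and u :: "real \<Rightarrow> real"
  assumes "convex Prizes" and "pi0 \<in> Prizes" and "pi1 \<in> Prizes" and "pi0 < pi1"
    and "admissible_cost cstar"
    and "parsimonious_rep Prizes pi0 pi1 R c u"
    and "unbounded Prizes R"
  shows "(overconfident Prizes pi0 pi1 R cstar \<longleftrightarrow> (\<forall>p\<in>DeltaS. c p \<le> cstar p))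
       \<and> (optimistic Prizes pi0 pi1 R cstar \<longleftrightarrow> up_shifted c cstar)"
proof -
  note pis = assms(2,3,4)
  note rep = assms(6)
  note unb = assms(7)
  have admc: "admissible_cost c" using rep unfolding parsimonious_rep_def by blast
  have okc: "okc c" and oks: "okc cstar" using adm_okc admc assms(5) by auto
  have Vs_const: "Vr cstar (\<lambda>s. k) = k" for k using Vr_const_adm[OF assms(5)] .
  have Vc_const: "Vr c (\<lambda>s. k) = k" for k using Vr_const_adm[OF admc] .
  have Rw: "R w w' \<longleftrightarrow> Vr c (EUv u w') \<le> Vr c (EUv u w)" if "w \<in> contracts Prizes" "w' \<in> contracts Prizes" for w w'
    using rep_R[OF rep that] .
  have Pw: "rep_pref cstar u' w w' \<longleftrightarrow> Vr cstar (EUv u w') \<le> Vr cstar (EUv u w)"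
    if "parsimonious_rep Prizes pi0 pi1 R c' u'" "w \<in> contracts Prizes" "w' \<in> contracts Prizes" for w w' c' u'
    using rep_pref_Vr[OF oks, of u' w w'] EUv_unique[OF rep that(1) pis that(2)] EUv_unique[OF rep that(1) pis that(3)]
    by simp
  have P1: "overconfident Prizes pi0 pi1 R cstar \<longleftrightarrow> (\<forall>p\<in>DeltaS. c p \<le> cstar p)"
  proof
    assume oc: "overconfident Prizes pi0 pi1 R cstar"
    hence mc: "more_confident Prizes R (rep_pref cstar u)" using rep unfolding overconfident_def by blast
    show "\<forall>p\<in>DeltaS. c p \<le> cstar p"
    proof (rule ccontr)
      assume "\<not> (\<forall>p\<in>DeltaS. c p \<le> cstar p)"
      then obtain p0 where p0: "p0 \<in> DeltaS" "cstar p0 < c p0" by (auto simp: not_le)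
      have "0 \<le> cstar p0" using oks p0 unfolding okc_def by auto
      then obtain M where M: "cstar p0 = ereal M" using p0 by (cases "cstar p0") auto
      obtain a where a: "Vr c a < Vr cstar a"
        using part1_core[OF okc oks _ _ p0(1) M] p0 M admc unfolding admissible_cost_def by auto
      obtain w where w: "w \<in> contracts Prizes" "EUv u w = a" using realize_contract[OF rep unb] by blast
      obtain x where x: "x \<in> lotteries Prizes" "EU u x = Vr c a" using realize[OF rep unb] by blast
      have cx: "const_contract x \<in> contracts Prizes" by (rule const_in_contracts[OF x(1)])
      have "strict_pref (rep_pref cstar u) w (const_contract x)"
        unfolding strict_pref_def using Pw[OF rep w(1) cx] Pw[OF rep cx w(1)] a w(2) x(2)
        by (simp add: EUv_const Vs_const)
      hence "strict_pref R w (const_contract x)" using mc w(1) x(1) unfolding more_confident_def by blast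
      thus False unfolding strict_pref_def using Rw[OF w(1) cx] Rw[OF cx w(1)] w(2) x(2)
        by (simp add: EUv_const Vc_const)
    qed
  next
    assume le: "\<forall>p\<in>DeltaS. c p \<le> cstar p"
    have mono: "Vr cstar a \<le> Vr c a" for a by (rule Vr_mono_cost[OF okc oks le])
    show "overconfident Prizes pi0 pi1 R cstar"
      unfolding overconfident_def more_confident_def
    proof (intro allI impI ballI conjI)
      fix c' u' x and w :: "'s \<Rightarrow> real pmf" assume r2: "parsimonious_rep Prizes pi0 pi1 R c' u'"
        and w: "w \<in> contracts Prizes" and x: "x \<in> lotteries Prizes"
      have cx: "const_contract x \<in> contracts Prizes" by (rule const_in_contracts[OF x])
      note m = mono[of "EUv u w"]
      show "rep_pref cstar u' w (const_contract x) \<Longrightarrow> R w (const_contract x)"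
        using Pw[OF r2 w cx] Rw[OF w cx] m by (simp add: EUv_const Vs_const Vc_const)
      show "strict_pref (rep_pref cstar u') w (const_contract x) \<Longrightarrow> strict_pref R w (const_contract x)"
        unfolding strict_pref_def using Pw[OF r2 w cx] Pw[OF r2 cx w] Rw[OF w cx] Rw[OF cx w] m
        by (simp add: EUv_const Vs_const Vc_const)
    qed
  qed
  have P2: "optimistic Prizes pi0 pi1 R cstar \<longleftrightarrow> up_shifted c cstar"
  proof
    assume op: "optimistic Prizes pi0 pi1 R cstar"
    hence mo: "more_optimistic Prizes R (rep_pref cstar u)" using rep unfolding optimistic_def by blast
    have C: "Vr c a + Vr cstar (\<lambda>s. a s + d s) \<le> Vr c (\<lambda>s. a s + d s) + Vr cstar a" if md: "mono d" for a d
    proof -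
      define A where "A = (\<lambda>s. a s + d s)"
      define k where "k = Vr cstar a - Vr cstar A"
      obtain w where w: "w \<in> contracts Prizes" "EUv u w = (\<lambda>s. A s + k)" using realize_contract[OF rep unb] by blast
      obtain w' where w': "w' \<in> contracts Prizes" "EUv u w' = a" using realize_contract[OF rep unb] by blast
      have "mono (\<lambda>s. EUv u w s - EUv u w' s)"
        using md unfolding w(2) w'(2) A_def mono_def by auto
      hence st: "steeper R w w'" using steeper_mono[OF rep w(1) w'(1)] by simp
      have "rep_pref cstar u w w'"
        using Pw[OF rep w(1) w'(1)] w(2) w'(2) Vr_shift[OF oks, of A k] by (simp add: k_def)
      hence "R w w'" using mo st w(1) w'(1) unfolding more_optimistic_def by blast
      hence "Vr c a \<le> Vr c A + k" using Rw[OF w(1) w'(1)] w(2) w'(2) Vr_shift[OF okc, of A k] by simp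
      thus ?thesis unfolding k_def A_def by simp
    qed
    show "up_shifted c cstar"
      unfolding up_shifted_def
    proof (intro ballI)
      fix p p' :: "'s \<Rightarrow> real" assume p: "p \<in> DeltaS" "p' \<in> DeltaS"
      have cvc: "convex_cost c" "lsc_cost c" using admc unfolding admissible_cost_def by auto
      have cvs: "convex_cost cstar" "lsc_cost cstar" using assms(5) unfolding admissible_cost_def by auto
      show "\<exists>q\<in>DeltaS. \<exists>q'\<in>DeltaS. fosd p q' \<and> fosd q p' \<and>
          (\<lambda>s. p s / 2 + p' s / 2) = (\<lambda>s. q s / 2 + q' s / 2) \<and> c q + cstar q' \<le> c p + cstar p'"
      proof (cases "c p < \<infinity> \<and> cstar p' < \<infinity>")
        case True
        then obtain x1 x2 where x: "c p = ereal x1" "cstar p' = ereal x2"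
          using okc_fin[OF okc p(1)] okc_fin[OF oks p(2)] by blast
        obtain q q' where qq: "q \<in> DeltaS" "q' \<in> DeltaS" "\<forall>t. tls p' t \<le> tls q t" "\<forall>s. q s + q' s = p s + p' s"
          "c q + cstar q' \<le> ereal (x1 + x2)"
          using main_dual[OF okc oks cvc(1) cvs(1) cvc(2) cvs(2) C p x] by blast
        show ?thesis
          apply (rule bexI[where x=q], rule bexI[where x=q'])
          using feas_to_fosd[OF qq(3,4)] qq(1,2,5) x by auto
      next
        case False
        have C0: "Vr (\<lambda>_. 0::ereal) a + Vr (\<lambda>_. 0::ereal) (\<lambda>s. a s + d s)
           \<le> Vr (\<lambda>_. 0::ereal) (\<lambda>s. a s + d s) + Vr (\<lambda>_. 0::ereal) a" for a d :: "'s \<Rightarrow> real"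
          by simp
        obtain q q' where qq: "q \<in> DeltaS" "q' \<in> DeltaS" "\<forall>t. tls p' t \<le> tls q t" "\<forall>s. q s + q' s = p s + p' s"
          using main_dual[OF zero_cost_ok(1) zero_cost_ok(1) zero_cost_ok(2) zero_cost_ok(2)
              zero_cost_ok(3) zero_cost_ok(3) C0 p, of 0 0] by auto
        have "0 \<le> c p" "0 \<le> cstar p'" using okc oks p unfolding okc_def by auto
        hence "c p + cstar p' = \<infinity>" using False by (auto simp: not_less)
        thus ?thesis
          apply -
          apply (rule bexI[where x=q], rule bexI[where x=q'])
          using feas_to_fosd[OF qq(3,4)] qq(1,2) by auto
      qed
    qed
  next
    assume us: "up_shifted c cstar"
    show "optimistic Prizes pi0 pi1 R cstar"
      unfolding optimistic_def more_optimistic_def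
    proof (intro allI impI ballI conjI)
      fix c' u' and w w' :: "'s \<Rightarrow> real pmf" assume r2: "parsimonious_rep Prizes pi0 pi1 R c' u'"
        and w: "w \<in> contracts Prizes" "w' \<in> contracts Prizes" and st: "steeper R w w'"
      have "mono (\<lambda>s. EUv u w s - EUv u w' s)" using steeper_mono[OF rep w] st by simp
      hence ineq: "Vr c (EUv u w') + Vr cstar (EUv u w) \<le> Vr c (EUv u w) + Vr cstar (EUv u w')"
        by (rule upshift_ineq[OF okc oks us])
      show "rep_pref cstar u' w w' \<Longrightarrow> R w w'"
      proof -
        assume "rep_pref cstar u' w w'"
        hence "Vr cstar (EUv u w') \<le> Vr cstar (EUv u w)" using Pw[OF r2 w] by blast
        hence "Vr c (EUv u w') \<le> Vr c (EUv u w)" using ineq by linarith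
        thus "R w w'" using Rw[OF w] by blast
      qed
      show "strict_pref (rep_pref cstar u') w w' \<Longrightarrow> strict_pref R w w'"
      proof -
        assume "strict_pref (rep_pref cstar u') w w'"
        hence "\<not> rep_pref cstar u' w' w" unfolding strict_pref_def by blast
        hence "Vr cstar (EUv u w') < Vr cstar (EUv u w)" using Pw[OF r2 w(2,1)] by auto
        hence lt: "Vr c (EUv u w') < Vr c (EUv u w)" using ineq by linarith
        thus "strict_pref R w w'" unfolding strict_pref_def using Rw[OF w] Rw[OF w(2,1)] by auto
      qed
    qed
  qed
  show ?thesis using P1 P2 by blast
qed


end
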